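(* Let $p,q$ be consecutive patterns of length 4 satisfying the standing assumptions below. Let $n\ge1$, $S,U\subseteq[n]$, and let $\epsilon\in I_n$ with $\operatorname{Em}(q,\epsilon)=S$ and $\operatorname{Em}(p,\epsilon)=U$. Then $\operatorname{Em}(p,\phi^{-1}_{\ge S}(\epsilon))\subseteq S\cup U$.
   Context: An inversion sequence of length $n$ is an integer sequence $\epsilon_1\cdots\epsilon_n$ with $0\le\epsilon_i<i$; $I_n$ is the set of them. The reduction of an integer word replaces each occurrence of its $k$-th smallest distinct value by $k-1$. A consecutive pattern $p=\underline{p_1p_2p_3p_4}$ occurs in $\epsilon$ at position $i$ if the reduction of $\epsilon_i\epsilon_{i+1}\epsilon_{i+2}\epsilon_{i+3}$ is $p_1p_2p_3p_4$; $\operatorname{Em}(p,\epsilon)$ is the set of such $i$. A pattern is non-overlapping if no two of its occurrences in any sequence overlap in more than one entry (i.e. no two occurrences are at positions differing by 1 or 2). Standing assumptions: $p$ and $q$ are each non-overlapping, agree in their first entries and in their last entries, have the same maximum entry $d$, and each contains every value in $\{0,\dots,d\}$. Change operation: if $p$ occurs in $\epsilon$ at $i$, let $f$ be the order-preserving bijection from $\{0,\dots,d\}$ onto the set of values $\{\epsilon_i,\dots,\epsilon_{i+3}\}$, so that $\epsilon_{i+j-1}=f(p_j)$; changing this occurrence to $q$ means replacing $\epsilon_{i+j-1}$ by $f(q_j)$ for $j=1,\dots,4$ (and symmetrically for changing an occurrence of $q$ to $p$). It is assumed that $p$ and $q$ are interchangeable, i.e. such changes (in either direction) applied to an inversion sequence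 always yield an inversion sequence. For $T\subseteq[n]$, let $I_{n,p}(\supseteq T)=\{\epsilon\in I_n:\operatorname{Em}(p,\epsilon)\supseteq T\}$ and similarly for $q$; $\phi_{\ge T}:I_{n,p}(\supseteq T)\to I_{n,q}(\supseteq T)$ changes the occurrences of $p$ at all positions in $T$ to occurrences of $q$, and it is assumed to be a bijection whose inverse $\phi^{-1}_{\ge T}$ changes the occurrences of $q$ at all positions in $T$ to occurrences of $p$. *)

theory Defs
  imports Main
begin

text \<open>Words are lists of naturals; entry i (1-indexed) of xs is xs ! (i - 1).\<close>

definition inv_seqs :: "nat \<Rightarrow> nat list set" where
  "inv_seqs n = {xs. length xs = n \<and> (\<forall>j<n. xs ! j < j + 1)}"

definition red :: "nat list \<Rightarrow> nat list" where
  "red w = map (\<lambda>x. card {y \<in> set w. y < x}) w"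

definition window :: "nat list \<Rightarrow> nat \<Rightarrow> nat list" where
  "window xs i = take 4 (drop (i - 1) xs)"

definition Em :: "nat list \<Rightarrow> nat list \<Rightarrow> nat set" where
  "Em p xs = {i. 1 \<le> i \<and> i + 3 \<le> length xs \<and> red (window xs i) = p}"

definition nonoverlapping :: "nat list \<Rightarrow> bool" where
  "nonoverlapping p \<longleftrightarrow>
     (\<forall>xs i j. i \<in> Em p xs \<longrightarrow> j \<in> Em p xs \<longrightarrow> i < j \<longrightarrow> i + 3 \<le> j)"

text \<open>Change the occurrence at position i (of some pattern) into pattern q:
  f is the order-preserving bijection from {0..d} onto the window's value set,
  i.e. f k = k-th smallest value of the window.\<close>
definition chg :: "nat list \<Rightarrow> nat list \<Rightarrow> nat \<Rightarrow> nat list" where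
  "chg q xs i = (let vs = sorted_list_of_set (set (window xs i)) in
     map (\<lambda>k. if i - 1 \<le> k \<and> k < i + 3 then vs ! (q ! (k - (i - 1))) else xs ! k)
       [0..<length xs])"

text \<open>Change the occurrences at all positions of T (in increasing order) into q.
  phiT p q T is the paper's phi_{>=T}; phiT q p T is the paper's phi^{-1}_{>=T}.\<close>
definition phiT :: "nat list \<Rightarrow> nat list \<Rightarrow> nat set \<Rightarrow> nat list \<Rightarrow> nat list" where
  "phiT p q T xs = foldl (chg q) xs (sorted_list_of_set T)"

definition Isup :: "nat \<Rightarrow> nat list \<Rightarrow> nat set \<Rightarrow> nat list set" where
  "Isup n p T = {xs \<in> inv_seqs n. T \<subseteq> Em p xs}"

definition standing :: "nat list \<Rightarrow> nat list \<Rightarrow> nat \<Rightarrow> bool" where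
  "standing p q d \<longleftrightarrow>
     length p = 4 \<and> length q = 4 \<and>
     nonoverlapping p \<and> nonoverlapping q \<and>
     p ! 0 = q ! 0 \<and> p ! 3 = q ! 3 \<and>
     Max (set p) = d \<and> Max (set q) = d \<and>
     set p = {0..d} \<and> set q = {0..d}"

definition interchangeable :: "nat list \<Rightarrow> nat list \<Rightarrow> bool" where
  "interchangeable p q \<longleftrightarrow>
     (\<forall>n xs i. xs \<in> inv_seqs n \<longrightarrow> i \<in> Em p xs \<longrightarrow> chg q xs i \<in> inv_seqs n) \<and>
     (\<forall>n xs i. xs \<in> inv_seqs n \<longrightarrow> i \<in> Em q xs \<longrightarrow> chg p xs i \<in> inv_seqs n)"

definition phi_bij :: "nat list \<Rightarrow> nat list \<Rightarrow> bool" where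
  "phi_bij p q \<longleftrightarrow>
     (\<forall>n T. T \<subseteq> {1..n} \<longrightarrow>
        bij_betw (phiT p q T) (Isup n p T) (Isup n q T) \<and>
        (\<forall>xs \<in> Isup n q T. phiT q p T xs \<in> Isup n p T \<and> phiT p q T (phiT q p T xs) = xs))"

end

theory Submission
  imports Defs
begin

lemma idx_card:
  assumes "sorted vs" "distinct vs" "i < length vs"
  shows "card {y \<in> set vs. y < vs!i} = i"
proof -
  have "{y \<in> set vs. y < vs!i} = (!) vs ` {..<i}"
  proof (intro set_eqI iffI)
    fix y assume "y \<in> {y \<in> set vs. y < vs!i}"
    then obtain m where m: "m < length vs" "y = vs!m" "vs!m < vs!i" by (auto simp: in_set_conv_nth)
    have "m < i"
    proof (rule ccontr)
      assume "\<not> m < i"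
      then have "i \<le> m" by simp
      then have "vs!i \<le> vs!m" using assms m by (simp add: sorted_nth_mono)
      then show False using m by simp
    qed
    then show "y \<in> (!) vs ` {..<i}" using m by auto
  next
    fix y assume "y \<in> (!) vs ` {..<i}"
    then obtain m where m: "m < i" "y = vs!m" by auto
    have "vs!m \<le> vs!i" using assms m by (simp add: sorted_nth_mono)
    moreover have "vs!m \<noteq> vs!i" using assms m by (simp add: nth_eq_iff_index_eq)
    ultimately show "y \<in> {y \<in> set vs. y < vs!i}" using m assms by auto
  qed
  moreover have "inj_on ((!) vs) {..<i}" using assms by (auto simp: inj_on_def nth_eq_iff_index_eq)
  ultimately show ?thesis by (simp add: card_image)
qed

lemma vs_red:
  assumes "t < length w"
  shows "sorted_list_of_set (set w) ! (red w ! t) = w ! t"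
proof -
  let ?vs = "sorted_list_of_set (set w)"
  have sv: "set ?vs = set w" by simp
  have "w!t \<in> set ?vs" using assms by simp
  then obtain m where m: "m < length ?vs" "?vs ! m = w!t" by (metis in_set_conv_nth)
  have "red w ! t = card {y \<in> set w. y < w!t}" using assms by (simp add: red_def)
  also have "\<dots> = card {y \<in> set ?vs. y < ?vs!m}" using m sv by simp
  also have "\<dots> = m" using idx_card[of ?vs m] m by simp
  finally show ?thesis using m by simp
qed

lemma card_set_red: "card (set (red w)) = card (set w)"
proof -
  let ?g = "\<lambda>x. card {y \<in> set w. y < x}"
  have "set (red w) = ?g ` set w" by (simp add: red_def)
  moreover have "inj_on ?g (set w)"
  proof (rule inj_onI)
    fix x x' assume xx: "x \<in> set w" "x' \<in> set w" "?g x = ?g x'"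
    have lt: "?g a < ?g b" if "a \<in> set w" "b \<in> set w" "a < b" for a b
    proof -
      have "{y \<in> set w. y < a} \<subset> {y \<in> set w. y < b}" using that by auto
      then show ?thesis by (simp add: psubset_card_mono)
    qed
    show "x = x'"
    proof (rule ccontr)
      assume "x \<noteq> x'"
      then have "x < x' \<or> x' < x" by auto
      then show False using lt[OF xx(1) xx(2)] lt[OF xx(2) xx(1)] xx(3) by auto
    qed
  qed
  ultimately show ?thesis by (simp add: card_image)
qed

lemma red_map:
  assumes "sorted vs" "distinct vs" "set p = {0..<length vs}"
  shows "red (map ((!) vs) p) = p"
proof -
  have "set (map ((!) vs) p) = (!) vs ` {0..<length vs}" using assms(3) by simp
  also have "\<dots> = set vs"
  proof (intro set_eqI iffI)
    fix y assume "y \<in> (!) vs ` {0..<length vs}" then show "y \<in> set vs" by auto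
  next
    fix y assume "y \<in> set vs" then obtain m where "m < length vs" "y = vs ! m"
      by (metis in_set_conv_nth)
    then show "y \<in> (!) vs ` {0..<length vs}" by auto
  qed
  finally have st: "set (map ((!) vs) p) = set vs" .
  show ?thesis
  proof (rule nth_equalityI)
    show "length (red (map ((!) vs) p)) = length p" by (simp add: red_def)
  next
    fix t assume "t < length (red (map ((!) vs) p))"
    then have t: "t < length p" by (simp add: red_def)
    then have "p!t \<in> set p" by simp
    then have pt: "p!t < length vs" using assms(3) by auto
    have "red (map ((!) vs) p) ! t = card {y \<in> set vs. y < vs ! (p!t)}"
      using t st by (simp add: red_def)
    also have "\<dots> = p!t" using idx_card assms pt by blast
    finally show "red (map ((!) vs) p) ! t = p ! t" .
  qed
qed

lemma window_len: "1 \<le> i \<Longrightarrow> i + 3 \<le> length a \<Longrightarrow> length (window a i) = 4"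
  by (simp add: window_def)

lemma window_nth: "1 \<le> i \<Longrightarrow> i + 3 \<le> length a \<Longrightarrow> t < 4 \<Longrightarrow> window a i ! t = a ! (i - 1 + t)"
  by (simp add: window_def)

lemma window_eq:
  assumes "1 \<le> i" "i + 3 \<le> length a" "length a = length b"
    "\<And>t. t < 4 \<Longrightarrow> a ! (i - 1 + t) = b ! (i - 1 + t)"
  shows "window a i = window b i"
  using assms by (intro nth_equalityI) (auto simp: window_len window_nth)

lemma chg_len: "length (chg p ys j) = length ys"
  by (simp add: chg_def Let_def)

lemma chg_props:
  assumes st: "standing p q d" and j: "1 \<le> j" "j + 3 \<le> length ys"
    and rq: "red (window ys j) = q"
  shows "\<And>k. k < length ys \<Longrightarrow> k \<noteq> j \<Longrightarrow> k \<noteq> j + 1 \<Longrightarrow> chg p ys j ! k = ys ! k"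
    and "red (window (chg p ys j) j) = p"
proof -
  let ?w = "window ys j"
  let ?vs = "sorted_list_of_set (set ?w)"
  have lw: "length ?w = 4" using j window_len by blast
  have sp: "set p = {0..d}" and sq: "set q = {0..d}" and lp: "length p = 4" and lq: "length q = 4"
    and p0: "p!0 = q!0" and p3: "p!3 = q!3"
    using st by (auto simp: standing_def)
  have cq: "card (set ?w) = d + 1" using card_set_red[of ?w] rq sq by simp
  have lvs: "length ?vs = d + 1" using cq by simp
  have ch: "chg p ys j ! k = (if j - 1 \<le> k \<and> k < j + 3 then ?vs ! (p ! (k - (j - 1))) else ys ! k)"
    if "k < length ys" for k
    using that by (simp add: chg_def Let_def)
  have key: "?vs ! (q ! t) = ys ! (j - 1 + t)" if "t < 4" for t
  proof -
    have "?vs ! (red ?w ! t) = ?w ! t" using vs_red[of t ?w] lw that by simp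
    then show ?thesis using rq window_nth[OF j that] by simp
  qed
  show "chg p ys j ! k = ys ! k" if "k < length ys" "k \<noteq> j" "k \<noteq> j + 1" for k
  proof (cases "j - 1 \<le> k \<and> k < j + 3")
    case True
    then have "k = j - 1 \<or> k = j + 2" using that by auto
    then show ?thesis
    proof
      assume "k = j - 1"
      then show ?thesis using ch[OF that(1)] key[of 0] p0 by simp
    next
      assume k: "k = j + 2"
      then have "k - (j - 1) = 3" using j by simp
      moreover have "j - 1 + 3 = k" using k j by simp
      ultimately show ?thesis using ch[OF that(1)] key[of 3] p3 k by simp
    qed
  next
    case False
    then show ?thesis using ch[OF that(1)] by (auto split: if_splits)
  qed
  have "window (chg p ys j) j = map ((!) ?vs) p"
  proof (rule nth_equalityI)
    show "length (window (chg p ys j) j) = length (map ((!) ?vs) p)"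
      using window_len[of j "chg p ys j"] j lp by (simp add: chg_len)
  next
    fix t assume "t < length (window (chg p ys j) j)"
    then have t: "t < 4" using window_len[of j "chg p ys j"] j by (simp add: chg_len)
    have "window (chg p ys j) j ! t = chg p ys j ! (j - 1 + t)"
      using window_nth[of j "chg p ys j" t] j t by (simp add: chg_len)
    also have "\<dots> = ?vs ! (p ! t)"
    proof -
      have lt: "j - 1 + t < length ys" using j t by simp
      have c: "j - 1 \<le> j - 1 + t \<and> j - 1 + t < j + 3" using j t by linarith
      have "chg p ys j ! (j - 1 + t) = ?vs ! (p ! (j - 1 + t - (j - 1)))"
        by (simp only: ch[OF lt] c if_True simp_thms)
      then show ?thesis by (simp only: add_diff_cancel_left')
    qed
    finally show "window (chg p ys j) j ! t = map ((!) ?vs) p ! t" using t lp by simp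
  qed
  moreover have "red (map ((!) ?vs) p) = p"
    using red_map[of ?vs p] lvs sp by (simp add: atLeastLessThanSuc_atLeastAtMost)
  ultimately show "red (window (chg p ys j) j) = p" by simp
qed

lemma fold_inv:
  assumes st: "standing p q d"
    and gap: "sorted_wrt (\<lambda>a b. a + 3 \<le> b) L" and em: "set L \<subseteq> Em q xs"
  shows "length (foldl (chg p) xs L) = length xs \<and>
    (\<forall>k<length xs. (\<forall>j\<in>set L. k \<noteq> j \<and> k \<noteq> j + 1) \<longrightarrow> foldl (chg p) xs L ! k = xs ! k) \<and>
    (\<forall>j\<in>set L. red (window (foldl (chg p) xs L) j) = p)"
  using gap em
proof (induction L rule: rev_induct)
  case Nil
  then show ?case by simp
next
  case (snoc j L)
  let ?ys = "foldl (chg p) xs L"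
  have gL: "sorted_wrt (\<lambda>a b. a + 3 \<le> b) L" and gj: "\<forall>l\<in>set L. l + 3 \<le> j"
    using snoc.prems(1) by (auto simp: sorted_wrt_append)
  have emL: "set L \<subseteq> Em q xs" and emj: "j \<in> Em q xs" using snoc.prems(2) by auto
  have IH: "length ?ys = length xs"
    "\<And>k. k < length xs \<Longrightarrow> (\<forall>j\<in>set L. k \<noteq> j \<and> k \<noteq> j + 1) \<Longrightarrow> ?ys ! k = xs ! k"
    "\<And>l. l \<in> set L \<Longrightarrow> red (window ?ys l) = p"
    using snoc.IH[OF gL emL] by auto
  have j1: "1 \<le> j" and j3: "j + 3 \<le> length xs" and rqx: "red (window xs j) = q"
    using emj by (auto simp: Em_def)
  have "window ?ys j = window xs j"
  proof (rule window_eq)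
    fix t assume "t < (4::nat)"
    show "?ys ! (j - 1 + t) = xs ! (j - 1 + t)"
    proof (rule IH(2))
      show "j - 1 + t < length xs" using j1 j3 \<open>t < 4\<close> by linarith
      show "\<forall>l\<in>set L. j - 1 + t \<noteq> l \<and> j - 1 + t \<noteq> l + 1"
      proof
        fix l assume "l \<in> set L"
        then have "l + 3 \<le> j" using gj by blast
        then show "j - 1 + t \<noteq> l \<and> j - 1 + t \<noteq> l + 1" by linarith
      qed
    qed
  qed (use j1 j3 IH(1) in auto)
  then have rq: "red (window ?ys j) = q" using rqx by simp
  have j3': "j + 3 \<le> length ?ys" using j3 IH(1) by simp
  note C = chg_props[OF st j1 j3' rq]
  have len: "length (chg p ?ys j) = length xs" using IH(1) by (simp add: chg_len)
  have un: "chg p ?ys j ! k = xs ! k" if "k < length xs" "\<forall>j'\<in>set (L @ [j]). k \<noteq> j' \<and> k \<noteq> j' + 1" for k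
    using C(1)[of k] IH that by auto
  have wins: "red (window (chg p ?ys j) l) = p" if "l \<in> set (L @ [j])" for l
  proof (cases "l = j")
    case True then show ?thesis using C(2) by simp
  next
    case False
    then have l: "l \<in> set L" using that by simp
    have l1: "1 \<le> l" and l3: "l + 3 \<le> length xs" using l emL by (auto simp: Em_def)
    have "window (chg p ?ys j) l = window ?ys l"
    proof (rule window_eq)
      fix t assume "t < (4::nat)"
      show "chg p ?ys j ! (l - 1 + t) = ?ys ! (l - 1 + t)"
      proof (rule C(1))
        have "l + 3 \<le> j" using gj l by blast
        then show "l - 1 + t < length ?ys" "l - 1 + t \<noteq> j" "l - 1 + t \<noteq> j + 1"
          using l1 l3 IH(1) \<open>t < 4\<close> by linarith+
      qed
    qed (use l1 l3 len IH(1) in auto)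
    then show ?thesis using IH(3)[OF l] by simp
  qed
  show ?case using len un wins by simp
qed

theorem lemma1:
  fixes p q :: "nat list" and d n :: nat and S U :: "nat set" and xs :: "nat list"
  assumes "standing p q d"
    and "interchangeable p q"
    and "phi_bij p q"
    and "n \<ge> 1"
    and "S \<subseteq> {1..n}" and "U \<subseteq> {1..n}"
    and "xs \<in> inv_seqs n"
    and "Em q xs = S" and "Em p xs = U"
  shows "Em p (phiT q p S xs) \<subseteq> S \<union> U"
proof
  fix i assume iE: "i \<in> Em p (phiT q p S xs)"
  let ?L = "sorted_list_of_set S"
  let ?r = "phiT q p S xs"
  have fin: "finite S" using assms(5) finite_subset by blast
  have setL: "set ?L = S" using fin by simp
  have nq: "nonoverlapping q" and np: "nonoverlapping p" using assms(1) by (auto simp: standing_def)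
  have "sorted_wrt (<) ?L" by simp
  then have gap: "sorted_wrt (\<lambda>a b. a + 3 \<le> b) ?L"
  proof (rule sorted_wrt_mono_rel[rotated])
    fix a b assume "a \<in> set ?L" "b \<in> set ?L" "a < b"
    then have "a \<in> Em q xs" "b \<in> Em q xs" "a < b" using setL assms(8) by auto
    then show "a + 3 \<le> b" using nq unfolding nonoverlapping_def by blast
  qed
  have r: "?r = foldl (chg p) xs ?L" by (simp add: phiT_def)
  note I = fold_inv[OF assms(1) gap, of xs, unfolded setL, OF equalityD2[OF assms(8)]]
  have lr: "length ?r = length xs" using I r by simp
  have i1: "1 \<le> i" and i3: "i + 3 \<le> length xs" and rp: "red (window ?r i) = p"
    using iE lr by (auto simp: Em_def)
  show "i \<in> S \<union> U"
  proof (rule ccontr)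
    assume nin: "i \<notin> S \<union> U"
    show False
    proof (cases "\<exists>j\<in>S. j \<noteq> i \<and> i \<le> j + 2 \<and> j \<le> i + 2")
      case True
      then obtain j where j: "j \<in> S" "j \<noteq> i" "i \<le> j + 2" "j \<le> i + 2" by blast
      have "j \<in> Em q xs" using j assms(8) by simp
      then have "1 \<le> j" "j + 3 \<le> length xs" by (auto simp: Em_def)
      moreover have "red (window ?r j) = p" using I r j by simp
      ultimately have "j \<in> Em p ?r" using lr by (simp add: Em_def)
      then have jE: "j \<in> Em p ?r" using lr by (simp add: Em_def)
      have ov: "\<And>a b. a \<in> Em p ?r \<Longrightarrow> b \<in> Em p ?r \<Longrightarrow> a < b \<Longrightarrow> a + 3 \<le> b"
        using np unfolding nonoverlapping_def by blast
      show False
      proof (cases "i < j")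
        case True then show ?thesis using ov[OF iE jE] j by simp
      next
        case False then have "j < i" using j by simp
        then show ?thesis using ov[OF jE iE] j by simp
      qed
    next
      case False
      have "window ?r i = window xs i"
      proof (rule window_eq)
        fix t assume t: "t < (4::nat)"
        have "\<forall>j\<in>S. i - 1 + t \<noteq> j \<and> i - 1 + t \<noteq> j + 1"
        proof
          fix j assume jS: "j \<in> S"
          then have "j \<noteq> i" using nin by blast
          then have "\<not> (i \<le> j + 2 \<and> j \<le> i + 2)" using False jS by blast
          then show "i - 1 + t \<noteq> j \<and> i - 1 + t \<noteq> j + 1" using i1 t by linarith
        qed
        moreover have "i - 1 + t < length xs" using i1 i3 t by simp
        ultimately show "?r ! (i - 1 + t) = xs ! (i - 1 + t)" using I r by simp
      qed (use i1 i3 lr in auto)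
      then have "i \<in> Em p xs" using rp i1 i3 by (simp add: Em_def)
      then show False using nin assms(9) by simp
    qed
  qed
qed

end
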